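(* Let $L \ge N$, let $\mathbf{T} \in \mathbb{R}^{L\times N}$ have full rank $N$, and let $\gamma>0$. Define $H:\mathbb{R}^N\rightrightarrows\mathbb{R}^N$ by $\mathbf{y}\in H(\mathbf{x})$ if and only if $\mathbf{x} = \mathbf{T}^{\dagger}S_\gamma\mathbf{T}(\mathbf{x}+\mathbf{y})$. Then for $\mathbf{y}\in\mathbb{R}^N$ we have $\mathbf{y}\in H(\mathbf{0})$ if and only if $\|\mathbf{T}\mathbf{y}\|_\infty \le \gamma$, where $\|\mathbf{T}\mathbf{y}\|_\infty = \max_{1\le j\le L}|[\mathbf{T}\mathbf{y}]_j|$.
   Context: $\mathbf{T}^*$ is the transpose, $\mathbf{T}^{\dagger}=(\mathbf{T}^*\mathbf{T})^{-1}\mathbf{T}^*$ the Moore–Penrose inverse. $S_\gamma:\mathbb{R}^L\to\mathbb{R}^L$ is componentwise soft shrinkage: $[S_\gamma(\mathbf{y})]_j = y_j-\gamma$ if $y_j\ge\gamma$, $y_j+\gamma$ if $y_j\le-\gamma$, $0$ if $|y_j|<\gamma$. *)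

theory Defs
  imports "HOL-Analysis.Analysis"
begin

definition soft_shrink :: "real \<Rightarrow> real ^ 'l \<Rightarrow> real ^ 'l" where
  "soft_shrink \<gamma> y = (\<chi> j. if y $ j \<ge> \<gamma> then y $ j - \<gamma>
                           else if y $ j \<le> - \<gamma> then y $ j + \<gamma> else 0)"

definition pinv :: "real ^ 'n ^ 'l \<Rightarrow> real ^ 'l ^ 'n" where
  "pinv T = matrix_inv (transpose T ** T) ** transpose T"

definition H_op :: "real ^ 'n ^ 'l \<Rightarrow> real \<Rightarrow> real ^ 'n \<Rightarrow> (real ^ 'n) set" where
  "H_op T \<gamma> x = {y. x = pinv T *v soft_shrink \<gamma> (T *v (x + y))}"

definition linf_norm :: "real ^ 'l \<Rightarrow> real" where
  "linf_norm v = Max (range (\<lambda>j. \<bar>v $ j\<bar>))"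

end

theory Submission
  imports Defs
begin

lemma dot_trans: fixes T :: "real ^ 'n ^ 'l"
  shows "y \<bullet> (transpose T *v s) = (T *v y) \<bullet> s"
  by (metis dot_lmul_matrix inner_commute vector_transpose_matrix transpose_transpose)

lemma shrink_nonneg: "0 \<le> v * (if v \<ge> g then v - g else if v \<le> - g then v + g else (0::real))"
  if "g > 0" for v g
  using that by (auto intro: mult_nonneg_nonneg mult_nonpos_nonpos)

lemma shrink_pos: "\<bar>v\<bar> > g \<Longrightarrow> g > 0 \<Longrightarrow> 0 < v * (if v \<ge> g then v - g else if v \<le> - g then v + g else (0::real))"
  by (auto intro: mult_pos_pos mult_neg_neg)

theorem theorem2p6:
  fixes T :: "real ^ 'n ^ 'l" and \<gamma> :: real and y :: "real ^ 'n"
  assumes "CARD('l) \<ge> CARD('n)"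
    and "rank T = CARD('n)"
    and "\<gamma> > 0"
  shows "y \<in> H_op T \<gamma> 0 \<longleftrightarrow> linf_norm (T *v y) \<le> \<gamma>"
proof -
  define A where "A = transpose T ** T"
  have injT: "inj ((*v) T)" using assms(2) full_rank_injective by blast
  have injA: "inj ((*v) A)"
  proof (rule injI)
    fix x z assume "A *v x = A *v z"
    hence "A *v (x - z) = 0" by (simp add: matrix_vector_mult_diff_distrib)
    hence "(x - z) \<bullet> (transpose T *v (T *v (x - z))) = 0"
      by (simp add: A_def matrix_vector_mul_assoc)
    hence "(T *v (x - z)) \<bullet> (T *v (x - z)) = 0" unfolding dot_trans .
    hence "T *v (x - z) = 0" by simp
    hence "T *v x = T *v z" by (simp add: matrix_vector_mult_diff_distrib)
    thus "x = z" using injT by (simp add: inj_eq)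
  qed
  have "invertible A"
    by (meson injA matrix_left_invertible_injective invertible_left_inverse)
  then have Ainv: "matrix_inv A ** A = mat 1"
    unfolding matrix_inv_def invertible_def by (rule someI_ex[where P="\<lambda>A'. A ** A' = mat 1 \<and> A' ** A = mat 1", THEN conjunct2])
  have Ainv2: "A ** matrix_inv A = mat 1"
    by (subst matrix_left_right_inverse) (rule Ainv)
  define v where "v = T *v y"
  define s where "s = soft_shrink \<gamma> v"
  have "y \<in> H_op T \<gamma> 0 \<longleftrightarrow> 0 = matrix_inv A *v (transpose T *v s)"
    by (simp only: H_op_def pinv_def A_def s_def v_def matrix_vector_mul_assoc mem_Collect_eq add_0_left)
  also have "\<dots> \<longleftrightarrow> transpose T *v s = 0"
  proof
    assume "0 = matrix_inv A *v (transpose T *v s)"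
    hence "A *v (matrix_inv A *v (transpose T *v s)) = 0" by simp
    thus "transpose T *v s = 0" by (simp add: matrix_vector_mul_assoc Ainv2)
  qed simp
  also have "\<dots> \<longleftrightarrow> linf_norm v \<le> \<gamma>"
  proof
    assume h: "transpose T *v s = 0"
    have "v \<bullet> s = 0" unfolding v_def dot_trans[symmetric] h by simp
    hence sum0: "(\<Sum>j\<in>UNIV. v $ j * s $ j) = 0" by (simp add: inner_vec_def)
    have nn: "\<And>j. 0 \<le> v $ j * s $ j"
      using shrink_nonneg[OF assms(3)] by (simp add: s_def soft_shrink_def)
    have z: "\<And>j. v $ j * s $ j = 0" using sum_nonneg_eq_0_iff[of UNIV "\<lambda>j. v $ j * s $ j"] nn sum0 by simp
    have b: "\<bar>v $ j\<bar> \<le> \<gamma>" for j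
    proof (rule ccontr)
      assume "\<not> \<bar>v $ j\<bar> \<le> \<gamma>"
      hence "0 < v $ j * s $ j" using shrink_pos[OF _ assms(3), of "v $ j"] by (simp add: s_def soft_shrink_def)
      thus False using z[of j] by simp
    qed
    show "linf_norm v \<le> \<gamma>" unfolding linf_norm_def
      by (subst Max_le_iff) (auto simp: b)
  next
    assume a: "linf_norm v \<le> \<gamma>"
    have "\<bar>v $ j\<bar> \<le> \<gamma>" for j
      using a unfolding linf_norm_def by (subst (asm) Max_le_iff) auto
    hence "s = 0" using assms(3) by (auto simp: s_def soft_shrink_def vec_eq_iff abs_le_iff) (smt (verit))+
    thus "transpose T *v s = 0" by simp
  qed
  finally show ?thesis by (simp add: v_def)
qed

end
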